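(* For every $n\ge2$ and every generalised snake configuration $\bar\rho\in\mathcal{GS}_n$, $$\operatorname{sgn}(\bar\rho)(-1)^{S(\bar\rho)}=\sum_{\theta\in\{0,1\}^2}C_\theta\exp\Big(\frac{\pi i\theta_1}{n}\big(A(\bar\rho)+\tfrac12C(\bar\rho)\big)+\frac{\pi i\theta_2}{n}\big(B(\bar\rho)+\tfrac12C(\bar\rho)\big)\Big),$$ where $C_\theta=\tfrac12(-1)^{(\theta_1+n+1)(\theta_2+n+1)}$ and $\operatorname{sgn}(\bar\rho)$ is the sign of $\bar\rho$ as a permutation of $\mathbb{M}_n$.
   Context: $\mathbb{T}_n=(\mathbb{Z}/n\mathbb{Z})^2$, $e^1=(1,0)$, $e^2=(0,1)$, $e^3=\frac12(e^1+e^2)$; mid-edges $\mathbb{M}_n$ = black $\{v+\frac12e^1:v\in\mathbb{T}_n\}$ ⊔ white $\{v+\frac12e^2:v\in\mathbb{T}_n\}$, coordinates mod $n$. A generalised snake configuration is a permutation $\bar\rho$ of $\mathbb{M}_n$ with $\bar\rho(x)\in\{x,x+e^3,x+e^1\}$ ($x$ black), $\bar\rho(x)\in\{x,x+e^3,x+e^2\}$ ($x$ white); $\mathcal{GS}_n$ their set. $S(\bar\rho)$ = number of vertices $v$ with $\bar\rho(v-\frac12e^1)=v+\frac12e^1$ and $\bar\rho(v-\frac12e^2)=v+\frac12e^2$ (crossings); $A(\bar\rho),B(\bar\rho),C(\bar\rho)$ = numbers of $x\in\mathbb{M}_n$ with $\bar\rho(x)=x+e^1$, $x+e^2$, $x+e^3$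 respectively. *)

theory Defs
  imports "HOL-Analysis.Analysis" "HOL-Combinatorics.Permutations"
begin

text \<open>Mid-edges of the torus T_n = (Z/nZ)^2. A mid-edge is encoded as (c, i, j) with
  0 <= i, j < n: if c = True it is the black mid-edge (i,j) + e1/2,
  if c = False it is the white mid-edge (i,j) + e2/2.\<close>

type_synonym midedge = "bool \<times> int \<times> int"

definition midedges :: "nat \<Rightarrow> midedge set" where
  "midedges n = {(c, i, j). 0 \<le> i \<and> i < int n \<and> 0 \<le> j \<and> j < int n}"

text \<open>Translations by e1, e2, e3 = (e1+e2)/2 on mid-edges, coordinates mod n.\<close>
definition tr_e1 :: "nat \<Rightarrow> midedge \<Rightarrow> midedge" where
  "tr_e1 n x = (case x of (c, i, j) \<Rightarrow> (c, (i + 1) mod int n, j))"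

definition tr_e2 :: "nat \<Rightarrow> midedge \<Rightarrow> midedge" where
  "tr_e2 n x = (case x of (c, i, j) \<Rightarrow> (c, i, (j + 1) mod int n))"

text \<open>black v + e1/2 + e3 = (v + e1) + e2/2 (white); white v + e2/2 + e3 = (v + e2) + e1/2 (black).\<close>
definition tr_e3 :: "nat \<Rightarrow> midedge \<Rightarrow> midedge" where
  "tr_e3 n x = (case x of (c, i, j) \<Rightarrow>
     (if c then (False, (i + 1) mod int n, j) else (True, i, (j + 1) mod int n)))"

definition GS :: "nat \<Rightarrow> (midedge \<Rightarrow> midedge) set" where
  "GS n = {\<rho>. \<rho> permutes midedges n \<and>
     (\<forall>x\<in>midedges n.
        (fst x \<longrightarrow> \<rho> x \<in> {x, tr_e3 n x, tr_e1 n x}) \<and>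
        (\<not> fst x \<longrightarrow> \<rho> x \<in> {x, tr_e3 n x, tr_e2 n x}))}"

text \<open>Crossings: vertices v with rho(v - e1/2) = v + e1/2 and rho(v - e2/2) = v + e2/2.
  v - e1/2 is the black mid-edge at v - e1, v - e2/2 the white mid-edge at v - e2.\<close>
definition crossings :: "nat \<Rightarrow> (midedge \<Rightarrow> midedge) \<Rightarrow> nat" where
  "crossings n \<rho> = card {(i, j). 0 \<le> i \<and> i < int n \<and> 0 \<le> j \<and> j < int n \<and>
      \<rho> (True, (i - 1) mod int n, j) = (True, i, j) \<and>
      \<rho> (False, i, (j - 1) mod int n) = (False, i, j)}"

definition countA :: "nat \<Rightarrow> (midedge \<Rightarrow> midedge) \<Rightarrow> nat" where
  "countA n \<rho> = card {x \<in> midedges n. \<rho> x = tr_e1 n x}"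

definition countB :: "nat \<Rightarrow> (midedge \<Rightarrow> midedge) \<Rightarrow> nat" where
  "countB n \<rho> = card {x \<in> midedges n. \<rho> x = tr_e2 n x}"

definition countC :: "nat \<Rightarrow> (midedge \<Rightarrow> midedge) \<Rightarrow> nat" where
  "countC n \<rho> = card {x \<in> midedges n. \<rho> x = tr_e3 n x}"

end

theory Submission
  imports Defs
begin


definition invn :: "('a \<Rightarrow> int) \<Rightarrow> ('a \<Rightarrow> int) \<Rightarrow> 'a set \<Rightarrow> nat" where
  "invn k f T = (\<Sum>p\<in>T. \<Sum>q\<in>T. if k p < k q \<and> f q < f p then 1 else 0)"

lemma invn_insert:
  assumes "finite T" "t \<notin> T"
  shows "invn k f (insert t T) = invn k f T + (\<Sum>p\<in>T. if k p < k t \<and> f t < f p then 1 else 0)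
          + (\<Sum>q\<in>T. if k t < k q \<and> f q < f t then 1 else 0)"
  using assms by (simp add: invn_def sum.distrib algebra_simps)

lemma invn_cong:
  assumes "\<And>x. x \<in> T \<Longrightarrow> f x = g x"
  shows "invn k f T = invn k g T"
  unfolding invn_def using assms by (intro sum.cong refl) auto

lemma sign_invn:
  fixes k :: "'a \<Rightarrow> int"
  assumes "finite T" "inj_on k T" "\<sigma> permutes T"
  shows "sign \<sigma> = (-1) ^ invn k (k \<circ> \<sigma>) T"
  using assms
proof (induction "card T" arbitrary: T \<sigma>)
  case 0
  then have "T = {}" by auto
  with 0 have "\<sigma> = id" by (simp add: permutes_empty)
  then show ?case using \<open>T = {}\<close> by (simp add: invn_def)
next
  case (Suc N)
  have fin: "finite T" and inj: "inj_on k T" and perm: "\<sigma> permutes T" using Suc by auto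
  have ne: "T \<noteq> {}" using Suc by auto
  have "Max (k ` T) \<in> k ` T" using fin ne by simp
  then obtain t where tT: "t \<in> T" and tdef: "k t = Max (k ` T)" by auto
  have tmax: "k p \<le> k t" if "p \<in> T" for p using fin that tdef by simp
  define T' where "T' = T - {t}"
  have T_eq: "T = insert t T'" and tT': "t \<notin> T'" and finT': "finite T'" using tT fin by (auto simp: T'_def)
  have cardT': "N = card T'" using Suc(2) T_eq tT' finT' by auto
  have injT': "inj_on k T'" using inj by (auto simp: T'_def inj_on_def)
  have lt: "k p < k t" if "p \<in> T'" for p
    using tmax[of p] that inj tT by (auto simp: T'_def inj_on_def) (metis order_le_less)
  have sT: "\<sigma> p \<in> T" if "p \<in> T" for p using perm that by (simp add: permutes_in_image)
  have sinj: "\<sigma> p = \<sigma> q \<longleftrightarrow> p = q" for p q using perm by (metis permutes_inj injD)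
  obtain u where uT: "u \<in> T" and su: "\<sigma> u = t"
    using perm tT by (metis permutes_surj surjD permutes_not_in)
  show ?case
  proof (cases "\<sigma> t = t")
    case True
    have perm': "\<sigma> permutes T'"
      using perm True by (auto simp: T'_def intro!: permutes_superset[OF perm])
    have "invn k (k \<circ> \<sigma>) T = invn k (k \<circ> \<sigma>) T'"
    proof -
      have "(\<Sum>p\<in>T'. if k p < k t \<and> (k \<circ> \<sigma>) t < (k \<circ> \<sigma>) p then 1 else 0) = (0::nat)"
      proof (intro sum.neutral ballI)
        fix p assume p: "p \<in> T'"
        have "\<sigma> p \<in> T" using p sT by (auto simp: T'_def)
        then have "k (\<sigma> p) \<le> k t" using tmax by auto
        then show "(if k p < k t \<and> (k \<circ> \<sigma>) t < (k \<circ> \<sigma>) p then 1 else 0) = (0::nat)"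
          using True by auto
      qed
      moreover have "(\<Sum>q\<in>T'. if k t < k q \<and> (k \<circ> \<sigma>) q < (k \<circ> \<sigma>) t then 1 else 0) = (0::nat)"
        using lt by (intro sum.neutral ballI) force
      ultimately show ?thesis by (simp add: T_eq invn_insert[OF finT' tT'])
    qed
    then show ?thesis using Suc(1)[OF cardT' finT' injT' perm'] by simp
  next
    case False
    define a where "a = \<sigma> t"
    have ut: "u \<noteq> t" using False su by auto
    have uT': "u \<in> T'" using uT ut by (auto simp: T'_def)
    define T'' where "T'' = T' - {u}"
    have T'_eq: "T' = insert u T''" and uT'': "u \<notin> T''" and finT'': "finite T''"
      using uT' finT' by (auto simp: T''_def)
    define \<sigma>' where "\<sigma>' = \<sigma> \<circ> Transposition.transpose t u"
    have perm1: "\<sigma>' permutes T" unfolding \<sigma>'_def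
      by (rule permutes_compose[OF permutes_swap_id[OF tT uT] perm])
    have s't: "\<sigma>' t = t" by (simp add: \<sigma>'_def su)
    have s'u: "\<sigma>' u = a" by (simp add: \<sigma>'_def a_def)
    have s'o: "\<sigma>' p = \<sigma> p" if "p \<noteq> t" "p \<noteq> u" for p using that by (simp add: \<sigma>'_def)
    have perm': "\<sigma>' permutes T'"
      using s't by (auto simp: T'_def intro!: permutes_superset[OF perm1])
    have sig: "\<sigma> = \<sigma>' \<circ> Transposition.transpose t u"
      by (simp add: \<sigma>'_def comp_assoc)
    have "sign \<sigma> = sign \<sigma>' * sign (Transposition.transpose t u)"
      unfolding sig
      by (rule sign_compose) (auto intro: permutes_imp_permutation[OF fin perm1]
            permutes_imp_permutation[OF fin permutes_swap_id[OF tT uT]])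
    then have sgn: "sign \<sigma> = - sign \<sigma>'" using ut by (simp add: sign_swap_id)
    have aT': "a \<in> T'" using sT[OF tT] False by (auto simp: T'_def a_def)
    have ka: "k a < k t" using lt aT' by auto
    define K where "K = (\<Sum>q\<in>T''. if k u < k q \<and> k a < k (\<sigma> q) then 1 else (0::nat))"
    have e1: "invn k (k \<circ> \<sigma>) T = invn k (k \<circ> \<sigma>) T' + (\<Sum>p\<in>T'. if k a < k (\<sigma> p) then 1 else 0)"
    proof -
      have "(\<Sum>p\<in>T'. if k p < k t \<and> (k \<circ> \<sigma>) t < (k \<circ> \<sigma>) p then 1 else 0)
          = (\<Sum>p\<in>T'. if k a < k (\<sigma> p) then 1 else (0::nat))"
        using lt by (intro sum.cong refl) (auto simp: a_def)
      moreover have "(\<Sum>q\<in>T'. if k t < k q \<and> (k \<circ> \<sigma>) q < (k \<circ> \<sigma>) t then 1 else 0) = (0::nat)"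
        using lt by (intro sum.neutral ballI) force
      ultimately show ?thesis by (simp add: T_eq invn_insert[OF finT' tT'])
    qed
    have e2: "invn k (k \<circ> \<sigma>') T = invn k (k \<circ> \<sigma>') T'"
    proof -
      have "(\<Sum>p\<in>T'. if k p < k t \<and> (k \<circ> \<sigma>') t < (k \<circ> \<sigma>') p then 1 else 0) = (0::nat)"
      proof (intro sum.neutral ballI)
        fix p assume p: "p \<in> T'"
        have "\<sigma>' p \<in> T" using p perm1 by (auto simp: T'_def permutes_in_image)
        then have "k (\<sigma>' p) \<le> k t" using tmax by auto
        then show "(if k p < k t \<and> (k \<circ> \<sigma>') t < (k \<circ> \<sigma>') p then 1 else 0) = (0::nat)"
          using s't by auto
      qed
      moreover have "(\<Sum>q\<in>T'. if k t < k q \<and> (k \<circ> \<sigma>') q < (k \<circ> \<sigma>') t then 1 else 0) = (0::nat)"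
        using lt by (intro sum.neutral ballI) force
      ultimately show ?thesis by (simp add: T_eq invn_insert[OF finT' tT'])
    qed
    have inT'': "p \<in> T'' \<Longrightarrow> p \<noteq> t \<and> p \<noteq> u \<and> p \<in> T" for p using T''_def T'_def by auto
    have same: "invn k (k \<circ> \<sigma>) T'' = invn k (k \<circ> \<sigma>') T''"
      by (rule invn_cong) (use inT'' s'o in auto)
    have kq: "k q \<noteq> k u" if "q \<in> T''" for q
      using inj inT''[OF that] uT by (auto simp: inj_on_def)
    have vq: "k (\<sigma> q) \<noteq> k a" if "q \<in> T''" for q
    proof
      assume "k (\<sigma> q) = k a"
      then have "\<sigma> q = a" using inj sT[of q] inT''[OF that] aT' by (auto simp: inj_on_def T'_def)
      then show False using inT''[OF that] sinj a_def by auto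
    qed
    have vqt: "k (\<sigma> q) < k t" if "q \<in> T''" for q
    proof -
      have "\<sigma> q \<in> T" using sT inT''[OF that] by auto
      moreover have "\<sigma> q \<noteq> t" using su sinj inT''[OF that] by metis
      ultimately show ?thesis using tmax inj tT by (metis inj_on_def order_le_less)
    qed
    have e3: "invn k (k \<circ> \<sigma>) T' = invn k (k \<circ> \<sigma>) T'' + (\<Sum>q\<in>T''. if k u < k q then 1 else 0)"
    proof -
      have "(\<Sum>p\<in>T''. if k p < k u \<and> (k \<circ> \<sigma>) u < (k \<circ> \<sigma>) p then 1 else 0) = (0::nat)"
        using vqt su by (intro sum.neutral ballI) force
      moreover have "(\<Sum>q\<in>T''. if k u < k q \<and> (k \<circ> \<sigma>) q < (k \<circ> \<sigma>) u then 1 else 0)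
          = (\<Sum>q\<in>T''. if k u < k q then 1 else (0::nat))"
        using vqt su by (intro sum.cong refl) auto
      ultimately show ?thesis by (simp add: T'_eq invn_insert[OF finT'' uT''])
    qed
    have e4: "invn k (k \<circ> \<sigma>') T' = invn k (k \<circ> \<sigma>') T''
       + (\<Sum>p\<in>T''. if k p < k u \<and> k a < k (\<sigma> p) then 1 else 0)
       + (\<Sum>q\<in>T''. if k u < k q \<and> k (\<sigma> q) < k a then 1 else 0)"
    proof -
      have "(\<Sum>p\<in>T''. if k p < k u \<and> (k \<circ> \<sigma>') u < (k \<circ> \<sigma>') p then 1 else 0)
          = (\<Sum>p\<in>T''. if k p < k u \<and> k a < k (\<sigma> p) then 1 else (0::nat))"
        using s'u s'o inT'' by (intro sum.cong refl) auto
      moreover have "(\<Sum>q\<in>T''. if k u < k q \<and> (k \<circ> \<sigma>') q < (k \<circ> \<sigma>') u then 1 else 0)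
          = (\<Sum>q\<in>T''. if k u < k q \<and> k (\<sigma> q) < k a then 1 else (0::nat))"
        using s'u s'o inT'' by (intro sum.cong refl) auto
      ultimately show ?thesis by (simp add: T'_eq invn_insert[OF finT'' uT''])
    qed
    have e5: "(\<Sum>p\<in>T'. if k a < k (\<sigma> p) then 1 else (0::nat))
        = 1 + (\<Sum>p\<in>T''. if k a < k (\<sigma> p) then 1 else 0)"
      using ka su by (simp add: T'_eq finT'' uT'')
    have e6: "(\<Sum>q\<in>T''. if k u < k q then 1 else (0::nat)) + (\<Sum>p\<in>T''. if k a < k (\<sigma> p) then 1 else 0)
       = (\<Sum>p\<in>T''. if k p < k u \<and> k a < k (\<sigma> p) then 1 else 0)
       + (\<Sum>q\<in>T''. if k u < k q \<and> k (\<sigma> q) < k a then 1 else 0) + 2 * K"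
    proof -
      have "\<And>q. q \<in> T'' \<Longrightarrow> (if k u < k q then 1 else (0::nat)) + (if k a < k (\<sigma> q) then 1 else 0)
         = (if k q < k u \<and> k a < k (\<sigma> q) then 1 else 0) + (if k u < k q \<and> k (\<sigma> q) < k a then 1 else 0)
           + 2 * (if k u < k q \<and> k a < k (\<sigma> q) then 1 else 0)"
        using kq vq by fastforce
      then have "(\<Sum>q\<in>T''. (if k u < k q then 1 else (0::nat)) + (if k a < k (\<sigma> q) then 1 else 0))
         = (\<Sum>q\<in>T''. (if k q < k u \<and> k a < k (\<sigma> q) then 1 else 0) + (if k u < k q \<and> k (\<sigma> q) < k a then 1 else 0)
           + 2 * (if k u < k q \<and> k a < k (\<sigma> q) then 1 else 0))"
        by (rule sum.cong[OF refl])
      then show ?thesis by (simp add: sum.distrib K_def sum_distrib_left)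
    qed
    have tot: "invn k (k \<circ> \<sigma>) T = invn k (k \<circ> \<sigma>') T + 1 + 2 * K"
      using e1 e2 e3 e4 e5 e6 same by simp
    have IH: "sign \<sigma>' = (-1) ^ invn k (k \<circ> \<sigma>') T'" using Suc(1)[OF cardT' finT' injT' perm'] .
    show ?thesis using sgn IH tot e2 by (simp add: power_add power_mult)
  qed
qed



lemma dfacts:
  fixes N a dp :: int
  assumes a: "0 \<le> a" "a < 2*N"
    and dpo: "a mod 2 = 1 \<Longrightarrow> dp = 1 \<or> dp = 2" and dpe: "a mod 2 = 0 \<Longrightarrow> dp = 0 \<or> dp = 1"
  shows "(a + dp \<ge> 2*N \<longleftrightarrow> a = 2*N-1) \<and> 0 \<le> dp \<and> dp \<le> 2 \<and> (a = 2*N-1 \<longrightarrow> dp \<ge> 1)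
     \<and> (dp = 2 \<longrightarrow> a mod 2 = 1) \<and> (dp = 0 \<longrightarrow> a mod 2 = 0)"
proof -
  have "a mod 2 = 0 \<or> a mod 2 = 1" by presburger
  then show ?thesis
  proof
    assume e: "a mod 2 = 0"
    then have "dp = 0 \<or> dp = 1" using dpe by simp
    moreover have "a \<noteq> 2*N-1" using e by presburger
    ultimately show ?thesis using a e by auto
  next
    assume e: "a mod 2 = 1"
    then have "dp = 1 \<or> dp = 2" using dpo by simp
    moreover have "a \<noteq> 2*N-2" using e by presburger
    ultimately show ?thesis using a e by auto
  qed
qed

lemma core_same:
  fixes N a b dp dq ap' bq' :: int
  assumes N: "N \<ge> 2"
    and a: "0 \<le> a" "a < 2*N" and b: "0 \<le> b" "b < 2*N"
    and dpo: "a mod 2 = 1 \<Longrightarrow> dp = 1 \<or> dp = 2" and dpe: "a mod 2 = 0 \<Longrightarrow> dp = 0 \<or> dp = 1"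
    and dqo: "b mod 2 = 1 \<Longrightarrow> dq = 1 \<or> dq = 2" and dqe: "b mod 2 = 0 \<Longrightarrow> dq = 0 \<or> dq = 1"
    and ap': "ap' = (if a + dp \<ge> 2*N then a + dp - 2*N else a + dp)"
    and bq': "bq' = (if b + dq \<ge> 2*N then b + dq - 2*N else b + dq)"
    and inj: "a \<noteq> b \<Longrightarrow> ap' \<noteq> bq'"
  shows "(if a < b \<and> bq' < ap' then 1 else 0)
       + (if dq = 2 \<and> dp = 0 \<and> a = 0 \<and> b = 2*N-1 then 1 else 0)
     = (if b = 2*N-1 \<and> a \<noteq> b then 1 else 0)
       + (if dp = 2 \<and> dq = 0 \<and> b = a + 1 then 1 else (0::nat))"
proof -
  note A = dfacts[OF a dpo dpe] and B = dfacts[OF b dqo dqe]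
  show ?thesis
  proof (cases "b = 2*N-1")
    case True
    then have bq: "bq' = dq - 1" using B bq' by auto
    have aa: "a \<noteq> 2*N-1 \<Longrightarrow> ap' = a + dp" using A ap' by auto
    show ?thesis
    proof (cases "a = b")
      case True
      then show ?thesis using \<open>b = 2*N-1\<close> B by auto
    next
      case False
      then have "ap' = a + dp" using aa \<open>b = 2*N-1\<close> by auto
      then show ?thesis using False inj bq \<open>b = 2*N-1\<close> A B a by auto
    qed
  next
    case False
    then have bq: "bq' = b + dq" using B bq' by auto
    show ?thesis
    proof (cases "a < b")
      case True
      then have "ap' = a + dp" using A ap' False b by auto
      then show ?thesis using True False bq A B inj by auto
    next
      case False
      then show ?thesis using \<open>b \<noteq> 2*N-1\<close> by auto
    qed
  qed
qed

lemma core: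
  fixes N Lp Lq a b dp dq Lp' Lq' ap' bq' :: int
  assumes N: "N \<ge> 2" and Lp: "0 \<le> Lp" "Lp < N" and Lq: "0 \<le> Lq" "Lq < N"
    and a: "0 \<le> a" "a < 2*N" and b: "0 \<le> b" "b < 2*N"
    and dpo: "a mod 2 = 1 \<Longrightarrow> dp = 1 \<or> dp = 2" and dpe: "a mod 2 = 0 \<Longrightarrow> dp = 0 \<or> dp = 1"
    and dqo: "b mod 2 = 1 \<Longrightarrow> dq = 1 \<or> dq = 2" and dqe: "b mod 2 = 0 \<Longrightarrow> dq = 0 \<or> dq = 1"
    and Lp': "Lp' = (if Lp = N - 1 then 0 else Lp + 1)"
    and Lq': "Lq' = (if Lq = N - 1 then 0 else Lq + 1)"
    and ap': "ap' = (if a + dp \<ge> 2*N then a + dp - 2*N else a + dp)"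
    and bq': "bq' = (if b + dq \<ge> 2*N then b + dq - 2*N else b + dq)"
    and inj: "Lp = Lq \<Longrightarrow> a \<noteq> b \<Longrightarrow> ap' \<noteq> bq'"
  shows "(if (Lp < Lq \<or> Lp = Lq \<and> a < b) \<and> (Lq' < Lp' \<or> Lq' = Lp' \<and> bq' < ap') then 1 else 0)
       + (if dq = 2 \<and> dp = 0 \<and> Lq = Lp \<and> a = (if b = 2*N-1 then 0 else b+1) \<and> b = 2*N-1 then 1 else 0)
     = (if Lp < Lq \<and> Lq = N - 1 then 1 else 0) + (if Lp = Lq \<and> b = 2*N-1 \<and> a \<noteq> b then 1 else 0)
       + (if dp = 2 \<and> dq = 0 \<and> Lp = Lq \<and> b = (if a = 2*N-1 then 0 else a+1) \<and> a \<noteq> 2*N-1 then 1 else (0::nat))"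
proof (cases "Lp = Lq")
  case True
  have eqL: "Lp' = Lq'" using True Lp' Lq' by simp
  have inj': "a \<noteq> b \<Longrightarrow> ap' \<noteq> bq'" using inj True by blast
  have e1: "(if (Lp < Lq \<or> Lp = Lq \<and> a < b) \<and> (Lq' < Lp' \<or> Lq' = Lp' \<and> bq' < ap') then 1 else (0::nat))
     = (if a < b \<and> bq' < ap' then 1 else 0)" using True eqL by auto
  have e2: "(if dq = 2 \<and> dp = 0 \<and> Lq = Lp \<and> a = (if b = 2*N-1 then 0 else b+1) \<and> b = 2*N-1 then 1 else (0::nat))
     = (if dq = 2 \<and> dp = 0 \<and> a = 0 \<and> b = 2*N-1 then 1 else 0)" using True by (cases "b = 2*N-1") simp_all
  have e3: "(if dp = 2 \<and> dq = 0 \<and> Lp = Lq \<and> b = (if a = 2*N-1 then 0 else a+1) \<and> a \<noteq> 2*N-1 then 1 else (0::nat))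
     = (if dp = 2 \<and> dq = 0 \<and> b = a + 1 then 1 else 0)" using True a b by (cases "a = 2*N-1") simp_all
  have e4: "(if Lp < Lq \<and> Lq = N - 1 then 1 else (0::nat)) = 0" using True by simp
  have e5: "(if Lp = Lq \<and> b = 2*N-1 \<and> a \<noteq> b then 1 else (0::nat)) = (if b = 2*N-1 \<and> a \<noteq> b then 1 else 0)"
    using True by simp
  show ?thesis unfolding e1 e2 e3 e4 e5 using core_same[OF N a b dpo dpe dqo dqe ap' bq' inj'] by simp
next
  case False
  have "((Lp < Lq \<or> Lp = Lq \<and> a < b) \<and> (Lq' < Lp' \<or> Lq' = Lp' \<and> bq' < ap')) \<longleftrightarrow> Lp < Lq \<and> Lq = N - 1"
  proof (cases "Lq = N - 1")
    case True
    then show ?thesis using False Lp Lq Lp' Lq' by auto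
  next
    case F2: False
    then have "Lq' = Lq + 1" using Lq' by simp
    moreover have "Lp' \<le> Lp + 1" using Lp' Lp by auto
    moreover have "Lp' = Lp + 1" if "Lp < Lq" using Lp' that F2 Lq by auto
    ultimately show ?thesis using False F2 by auto
  qed
  then show ?thesis using False by simp
qed



definition lev :: "nat \<Rightarrow> midedge \<Rightarrow> int" where
  "lev n z = (case z of (c, i, j) \<Rightarrow> (i + j) mod int n)"
definition xx :: "midedge \<Rightarrow> int" where
  "xx z = (case z of (c, i, j) \<Rightarrow> 2 * i + (if c then 1 else 0))"
definition key :: "nat \<Rightarrow> midedge \<Rightarrow> int" where
  "key n z = 2 * int n * lev n z + xx z"
definition succn :: "nat \<Rightarrow> int \<Rightarrow> int" where
  "succn n L = (if L = int n - 1 then 0 else L + 1)"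
definition wrapx :: "nat \<Rightarrow> int \<Rightarrow> int \<Rightarrow> int" where
  "wrapx n a d = (if a + d \<ge> 2 * int n then a + d - 2 * int n else a + d)"

lemma mod_succ:
  fixes x :: int assumes "N > 0"
  shows "(x + 1) mod N = (if x mod N = N - 1 then 0 else x mod N + 1)"
proof -
  have "(x + 1) mod N = (x mod N + 1) mod N" by (simp add: mod_add_left_eq)
  moreover have "0 \<le> x mod N" "x mod N < N" using assms by auto
  ultimately show ?thesis by (auto simp: mod_pos_pos_trivial)
qed

lemma lexkey:
  fixes N L1 L2 x1 x2 :: int
  assumes "0 \<le> x1" "x1 < N" "0 \<le> x2" "x2 < N"
  shows "N * L1 + x1 < N * L2 + x2 \<longleftrightarrow> L1 < L2 \<or> (L1 = L2 \<and> x1 < x2)"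
proof -
  have a: "N * L1 + y1 < N * L2 + y2" if "L1 < L2" "y1 < N" "0 \<le> y2" for L1 L2 y1 y2
  proof -
    have "N * (L1 + 1) \<le> N * L2" using that assms by (intro mult_left_mono) auto
    then show ?thesis using that by (simp add: algebra_simps)
  qed
  show ?thesis
  proof (cases "L1 < L2")
    case True then show ?thesis using a[OF True] assms by auto
  next
    case False
    then consider "L1 = L2" | "L2 < L1" by linarith
    then show ?thesis
    proof cases
      case 1 then show ?thesis by auto
    next
      case 2 then show ?thesis using a[OF 2, of x2 x1] assms False by auto
    qed
  qed
qed

locale snake =
  fixes n :: nat and \<rho> :: "midedge \<Rightarrow> midedge"
  assumes n2: "2 \<le> n" and gs: "\<rho> \<in> GS n"
begin

abbreviation "M \<equiv> midedges n"
definition "X = {z \<in> M. \<rho> z \<noteq> z}"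
definition dl :: "midedge \<Rightarrow> int" where
  "dl z = (if \<rho> z = tr_e1 n z then 2 else if \<rho> z = tr_e3 n z then 1 else 0)"

lemma perm: "\<rho> permutes M" using gs by (simp add: GS_def)

lemma moves:
  assumes "z \<in> M"
  shows "fst z \<Longrightarrow> \<rho> z \<in> {z, tr_e3 n z, tr_e1 n z}" "\<not> fst z \<Longrightarrow> \<rho> z \<in> {z, tr_e3 n z, tr_e2 n z}"
  using gs assms by (auto simp: GS_def)

lemma finM: "finite M"
proof -
  have "M \<subseteq> UNIV \<times> {0..<int n} \<times> {0..<int n}" by (auto simp: midedges_def)
  then show ?thesis by (rule finite_subset) auto
qed

lemma finX: "finite X" using finM by (simp add: X_def)

lemma XM: "X \<subseteq> M" by (auto simp: X_def)

lemma rhoM: "z \<in> M \<Longrightarrow> \<rho> z \<in> M" using perm by (simp add: permutes_in_image)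

lemma rho_inj: "\<rho> p = \<rho> q \<longleftrightarrow> p = q" using perm by (metis permutes_inj injD)

lemma rhoX: "z \<in> X \<Longrightarrow> \<rho> z \<in> X" using rhoM rho_inj by (auto simp: X_def)

lemma permX: "\<rho> permutes X"
  by (rule permutes_superset[OF perm]) (auto simp: X_def)

lemma npos: "int n > 0" using n2 by simp

lemma Mdef: "z \<in> M \<longleftrightarrow> (0 \<le> fst (snd z) \<and> fst (snd z) < int n \<and> 0 \<le> snd (snd z) \<and> snd (snd z) < int n)"
  by (cases z) (auto simp: midedges_def)

lemma succ_mod: "0 \<le> i \<Longrightarrow> i < int n \<Longrightarrow> (i + 1) mod int n = (if i = int n - 1 then 0 else i + 1)"
  using mod_succ[OF npos, of i] by (simp add: mod_pos_pos_trivial)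

lemma tr_facts:
  assumes "z \<in> M"
  shows "tr_e1 n z \<noteq> z" "tr_e2 n z \<noteq> z" "tr_e3 n z \<noteq> z" "tr_e1 n z \<noteq> tr_e3 n z"
        "tr_e2 n z \<noteq> tr_e3 n z" "tr_e1 n z \<noteq> tr_e2 n z"
        "tr_e1 n z \<in> M" "tr_e2 n z \<in> M" "tr_e3 n z \<in> M"
proof -
  obtain c i j where z: "z = (c, i, j)" by (cases z) auto
  have r: "0 \<le> i" "i < int n" "0 \<le> j" "j < int n" using assms z by (auto simp: midedges_def)
  have si: "(i + 1) mod int n \<noteq> i" using succ_mod[OF r(1,2)] n2 by auto
  have sj: "(j + 1) mod int n \<noteq> j" using succ_mod[OF r(3,4)] n2 by auto
  have mi: "0 \<le> (i + 1) mod int n" "(i + 1) mod int n < int n" "0 \<le> (j + 1) mod int n" "(j + 1) mod int n < int n"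
    using npos by auto
  show "tr_e1 n z \<noteq> z" "tr_e2 n z \<noteq> z" "tr_e3 n z \<noteq> z" "tr_e1 n z \<noteq> tr_e3 n z"
        "tr_e2 n z \<noteq> tr_e3 n z" "tr_e1 n z \<noteq> tr_e2 n z"
    using si sj by (auto simp: z tr_e1_def tr_e2_def tr_e3_def)
  show "tr_e1 n z \<in> M" "tr_e2 n z \<in> M" "tr_e3 n z \<in> M"
    using r mi by (auto simp: z tr_e1_def tr_e2_def tr_e3_def midedges_def)
qed

lemma ranges:
  assumes "z \<in> M"
  shows "0 \<le> lev n z" "lev n z < int n" "0 \<le> xx z" "xx z < 2 * int n"
    "xx z mod 2 = (if fst z then 1 else 0)"
proof -
  obtain c i j where z: "z = (c, i, j)" by (cases z) auto
  have r: "0 \<le> i" "i < int n" "0 \<le> j" "j < int n" using assms z by (auto simp: midedges_def)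
  show "0 \<le> lev n z" "lev n z < int n" using npos by (auto simp: z lev_def)
  show "0 \<le> xx z" "xx z < 2 * int n" using r by (auto simp: z xx_def)
  show "xx z mod 2 = (if fst z then 1 else 0)" by (auto simp: z xx_def)
qed

lemma pair_inj:
  assumes "p \<in> M" "q \<in> M" "lev n p = lev n q" "xx p = xx q"
  shows "p = q"
proof -
  obtain c i j where p: "p = (c, i, j)" by (cases p) auto
  obtain c' i' j' where q: "q = (c', i', j')" by (cases q) auto
  have r: "0 \<le> j" "j < int n" "0 \<le> j'" "j' < int n" using assms p q by (auto simp: midedges_def)
  have x: "2 * i + (if c then 1 else 0) = 2 * i' + (if c' then 1 else (0::int))"
    using assms(4) by (simp add: p q xx_def)
  have cc: "c = c'" and ii: "i = i'"
    using x by (cases c; cases c'; simp; presburger)+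
  have "(i + j) mod int n = (i + j') mod int n" using assms(3) by (simp add: p q lev_def ii)
  then have "((i + j) - i) mod int n = ((i + j') - i) mod int n" by (rule mod_diff_cong) simp
  then have "j mod int n = j' mod int n" by simp
  then have "j = j'" using r by (simp add: mod_pos_pos_trivial)
  then show ?thesis using p q cc ii by simp
qed

lemma key_less:
  assumes "p \<in> M" "q \<in> M"
  shows "key n p < key n q \<longleftrightarrow> lev n p < lev n q \<or> (lev n p = lev n q \<and> xx p < xx q)"
  using lexkey[of "xx p" "2 * int n" "xx q"] ranges[OF assms(1)] ranges[OF assms(2)]
  unfolding key_def by (simp add: mult.assoc)

lemma inj_key: "inj_on (key n) M"
proof (rule inj_onI)
  fix p q assume pq: "p \<in> M" "q \<in> M" "key n p = key n q"
  have "\<not> key n p < key n q" "\<not> key n q < key n p" using pq(3) by auto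
  then have "lev n p = lev n q \<and> xx p = xx q"
    using key_less[OF pq(1,2)] key_less[OF pq(2,1)] by auto
  then show "p = q" using pair_inj pq by blast
qed

lemma lev_succ: "((i + j) + 1) mod int n = succn n ((i + j) mod int n)"
  using mod_succ[OF npos, of "i + j"] by (simp add: succn_def)

lemma tr_lev_xx:
  assumes "z \<in> M"
  shows "lev n (tr_e3 n z) = succn n (lev n z)"
    "fst z \<Longrightarrow> lev n (tr_e1 n z) = succn n (lev n z)"
    "\<not> fst z \<Longrightarrow> lev n (tr_e2 n z) = succn n (lev n z)"
    "fst z \<Longrightarrow> xx (tr_e3 n z) = wrapx n (xx z) 1"
    "\<not> fst z \<Longrightarrow> xx (tr_e3 n z) = wrapx n (xx z) 1"
    "fst z \<Longrightarrow> xx (tr_e1 n z) = wrapx n (xx z) 2"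
    "\<not> fst z \<Longrightarrow> xx (tr_e2 n z) = wrapx n (xx z) 0"
proof -
  obtain c i j where z: "z = (c, i, j)" by (cases z) auto
  have r: "0 \<le> i" "i < int n" "0 \<le> j" "j < int n" using assms z by (auto simp: midedges_def)
  have l1: "((i + 1) mod int n + j) mod int n = succn n ((i + j) mod int n)"
  proof -
    have "((i + 1) mod int n + j) mod int n = ((i + 1) + j) mod int n" by (rule mod_add_left_eq)
    also have "(i + 1) + j = (i + j) + 1" by simp
    finally show ?thesis using lev_succ[of i j] by simp
  qed
  have l2: "(i + (j + 1) mod int n) mod int n = succn n ((i + j) mod int n)"
  proof -
    have "(i + (j + 1) mod int n) mod int n = (i + (j + 1)) mod int n" by (rule mod_add_right_eq)
    also have "i + (j + 1) = (i + j) + 1" by simp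
    finally show ?thesis using lev_succ[of i j] by simp
  qed
  show "lev n (tr_e3 n z) = succn n (lev n z)"
    using l1 l2 by (cases c) (auto simp: z tr_e3_def lev_def)
  show "fst z \<Longrightarrow> lev n (tr_e1 n z) = succn n (lev n z)"
    using l1 by (auto simp: z tr_e1_def lev_def)
  show "\<not> fst z \<Longrightarrow> lev n (tr_e2 n z) = succn n (lev n z)"
    using l2 by (auto simp: z tr_e2_def lev_def)
  have si: "(i + 1) mod int n = (if i = int n - 1 then 0 else i + 1)" using succ_mod[OF r(1,2)] .
  show "fst z \<Longrightarrow> xx (tr_e3 n z) = wrapx n (xx z) 1"
    using r by (cases "i = int n - 1") (auto simp: z tr_e3_def xx_def wrapx_def si)
  show "\<not> fst z \<Longrightarrow> xx (tr_e3 n z) = wrapx n (xx z) 1"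
    using r by (auto simp: z tr_e3_def xx_def wrapx_def)
  show "fst z \<Longrightarrow> xx (tr_e1 n z) = wrapx n (xx z) 2"
    using r by (cases "i = int n - 1") (auto simp: z tr_e1_def xx_def wrapx_def si)
  show "\<not> fst z \<Longrightarrow> xx (tr_e2 n z) = wrapx n (xx z) 0"
    using r by (auto simp: z tr_e2_def xx_def wrapx_def)
qed

lemma dl_cases:
  assumes "z \<in> X"
  shows "fst z \<Longrightarrow> (\<rho> z = tr_e1 n z \<and> dl z = 2) \<or> (\<rho> z = tr_e3 n z \<and> dl z = 1)"
    "\<not> fst z \<Longrightarrow> (\<rho> z = tr_e2 n z \<and> dl z = 0) \<or> (\<rho> z = tr_e3 n z \<and> dl z = 1)"
proof -
  have zM: "z \<in> M" and nz: "\<rho> z \<noteq> z" using assms by (auto simp: X_def)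
  note T = tr_facts[OF zM]
  show "fst z \<Longrightarrow> (\<rho> z = tr_e1 n z \<and> dl z = 2) \<or> (\<rho> z = tr_e3 n z \<and> dl z = 1)"
    using moves(1)[OF zM] nz T by (auto simp: dl_def)
  show "\<not> fst z \<Longrightarrow> (\<rho> z = tr_e2 n z \<and> dl z = 0) \<or> (\<rho> z = tr_e3 n z \<and> dl z = 1)"
    using moves(2)[OF zM] nz T by (auto simp: dl_def)
qed

lemma dl_fix: "z \<in> M \<Longrightarrow> z \<notin> X \<Longrightarrow> dl z = 0"
  using tr_facts[of z] by (auto simp: X_def dl_def)

lemma step:
  assumes "z \<in> X"
  shows "lev n (\<rho> z) = succn n (lev n z)" "xx (\<rho> z) = wrapx n (xx z) (dl z)"
    "xx z mod 2 = 1 \<Longrightarrow> dl z = 1 \<or> dl z = 2" "xx z mod 2 = 0 \<Longrightarrow> dl z = 0 \<or> dl z = 1"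
proof -
  have zM: "z \<in> M" using assms by (auto simp: X_def)
  note L = tr_lev_xx[OF zM] and D = dl_cases[OF assms]
  show "lev n (\<rho> z) = succn n (lev n z)" "xx (\<rho> z) = wrapx n (xx z) (dl z)"
    using L D by (cases "fst z"; auto)+
  show "xx z mod 2 = 1 \<Longrightarrow> dl z = 1 \<or> dl z = 2" "xx z mod 2 = 0 \<Longrightarrow> dl z = 0 \<or> dl z = 1"
    using D ranges(5)[OF zM] by (cases "fst z"; auto)+
qed


lemma sign_eq: "sign \<rho> = (-1) ^ invn (key n) (key n \<circ> \<rho>) X"
  using sign_invn[OF finX inj_on_subset[OF inj_key XM] permX] .

definition CRi :: "midedge \<Rightarrow> midedge \<Rightarrow> bool" where
  "CRi p q = (dl p = 2 \<and> dl q = 0 \<and> lev n p = lev n q \<and> xx q = (if xx p = 2 * int n - 1 then 0 else xx p + 1))"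

lemma pointwise:
  assumes p: "p \<in> X" and q: "q \<in> X"
  shows "(if key n p < key n q \<and> (key n \<circ> \<rho>) q < (key n \<circ> \<rho>) p then 1 else 0)
     + (if CRi q p \<and> xx q = 2 * int n - 1 then 1 else 0)
   = (if lev n p < lev n q \<and> lev n q = int n - 1 then 1 else 0)
     + (if lev n p = lev n q \<and> xx q = 2 * int n - 1 \<and> p \<noteq> q then 1 else 0)
     + (if CRi p q \<and> xx p \<noteq> 2 * int n - 1 then 1 else (0::nat))"
proof -
  have pM: "p \<in> M" and qM: "q \<in> M" using p q XM by auto
  have rpM: "\<rho> p \<in> M" and rqM: "\<rho> q \<in> M" using rhoM pM qM by auto
  note Rp = ranges[OF pM] and Rq = ranges[OF qM]
  note Sp = step[OF p] and Sq = step[OF q]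
  have N: "int n \<ge> 2" using n2 by simp
  have inj: "xx (\<rho> p) \<noteq> xx (\<rho> q)" if "lev n p = lev n q" "xx p \<noteq> xx q"
  proof
    assume e: "xx (\<rho> p) = xx (\<rho> q)"
    have "lev n (\<rho> p) = lev n (\<rho> q)" using Sp(1) Sq(1) that(1) by simp
    then have "\<rho> p = \<rho> q" using pair_inj[OF rpM rqM] e by simp
    then have "p = q" using rho_inj by simp
    then show False using that(2) by simp
  qed
  note C = core[OF N Rp(1,2) Rq(1,2) Rp(3,4) Rq(3,4) Sp(3,4) Sq(3,4)
      Sp(1)[unfolded succn_def] Sq(1)[unfolded succn_def]
      Sp(2)[unfolded wrapx_def] Sq(2)[unfolded wrapx_def] inj]
  have I: "(key n p < key n q \<and> (key n \<circ> \<rho>) q < (key n \<circ> \<rho>) p) \<longleftrightarrow>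
     ((lev n p < lev n q \<or> lev n p = lev n q \<and> xx p < xx q) \<and>
      (lev n (\<rho> q) < lev n (\<rho> p) \<or> lev n (\<rho> q) = lev n (\<rho> p) \<and> xx (\<rho> q) < xx (\<rho> p)))"
    using key_less[OF pM qM] key_less[OF rqM rpM] by simp
  have V: "(CRi q p \<and> xx q = 2 * int n - 1) \<longleftrightarrow> (dl q = 2 \<and> dl p = 0 \<and> lev n q = lev n p \<and>
      xx p = (if xx q = 2 * int n - 1 then 0 else xx q + 1) \<and> xx q = 2 * int n - 1)"
    by (auto simp: CRi_def)
  have E: "(CRi p q \<and> xx p \<noteq> 2 * int n - 1) \<longleftrightarrow> (dl p = 2 \<and> dl q = 0 \<and> lev n p = lev n q \<and>
      xx q = (if xx p = 2 * int n - 1 then 0 else xx p + 1) \<and> xx p \<noteq> 2 * int n - 1)"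
    by (auto simp: CRi_def)
  have S: "(lev n p = lev n q \<and> xx q = 2 * int n - 1 \<and> p \<noteq> q) \<longleftrightarrow>
      (lev n p = lev n q \<and> xx q = 2 * int n - 1 \<and> xx p \<noteq> xx q)"
    using pair_inj[OF pM qM] by auto
  show ?thesis unfolding I V E S by (rule C)
qed


definition Xl :: "int \<Rightarrow> midedge set" where "Xl k = {z \<in> X. lev n z = k}"

lemma succn_inj: "0 \<le> a \<Longrightarrow> a < int n \<Longrightarrow> 0 \<le> b \<Longrightarrow> b < int n \<Longrightarrow> succn n a = succn n b \<Longrightarrow> a = b"
  by (auto simp: succn_def split: if_splits)

lemma img_level:
  assumes "0 \<le> k" "k < int n"
  shows "\<rho> ` Xl k = Xl (succn n k)"
proof
  show "\<rho> ` Xl k \<subseteq> Xl (succn n k)"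
  proof (rule image_subsetI)
    fix z assume z: "z \<in> Xl k"
    then have zX: "z \<in> X" and lz: "lev n z = k" by (auto simp: Xl_def)
    show "\<rho> z \<in> Xl (succn n k)" using rhoX[OF zX] step(1)[OF zX] lz by (simp add: Xl_def)
  qed
next
  show "Xl (succn n k) \<subseteq> \<rho> ` Xl k"
  proof
    fix y assume y: "y \<in> Xl (succn n k)"
    then have "y \<in> X" by (simp add: Xl_def)
    then have "y \<in> \<rho> ` X" using permutes_image[OF permX] by simp
    then obtain z where z: "z \<in> X" "y = \<rho> z" by auto
    have zM: "z \<in> M" using z XM by auto
    have "succn n (lev n z) = succn n k" using y z step(1)[OF z(1)] by (simp add: Xl_def)
    then have "lev n z = k" using succn_inj ranges[OF zM] assms by blast
    then show "y \<in> \<rho> ` Xl k" using z by (auto simp: Xl_def)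
  qed
qed

lemma finXl: "finite (Xl k)" using finX by (simp add: Xl_def)

lemma card_level_succ:
  assumes "0 \<le> k" "k < int n"
  shows "card (Xl (succn n k)) = card (Xl k)"
proof -
  have "inj_on \<rho> (Xl k)" using rho_inj by (auto simp: inj_on_def)
  then show ?thesis using img_level[OF assms] card_image by metis
qed

definition mm :: nat where "mm = card (Xl 0)"

lemma card_level_nat: "k < n \<Longrightarrow> card (Xl (int k)) = mm"
proof (induction k)
  case 0 then show ?case by (simp add: mm_def)
next
  case (Suc k)
  have "succn n (int k) = int (Suc k)" using Suc.prems by (auto simp: succn_def)
  then show ?case using card_level_succ[of "int k"] Suc by simp
qed

lemma card_level: "0 \<le> k \<Longrightarrow> k < int n \<Longrightarrow> card (Xl k) = mm"
  using card_level_nat[of "nat k"] by simp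

lemma card_below: "k \<le> n \<Longrightarrow> card {z \<in> X. lev n z < int k} = k * mm"
proof (induction k)
  case 0
  have "0 \<le> lev n z" if "z \<in> X" for z using ranges(1) XM that by blast
  then have E: "{z \<in> X. lev n z < int 0} = {}" by force
  show ?case unfolding E by simp
next
  case (Suc k)
  have "{z \<in> X. lev n z < int (Suc k)} = {z \<in> X. lev n z < int k} \<union> Xl (int k)"
    by (auto simp: Xl_def)
  moreover have "{z \<in> X. lev n z < int k} \<inter> Xl (int k) = {}" by (auto simp: Xl_def)
  ultimately have "card {z \<in> X. lev n z < int (Suc k)} = card {z \<in> X. lev n z < int k} + card (Xl (int k))"
    using finX finXl by (simp add: card_Un_disjoint)
  then show ?case using Suc card_level_nat[of k] by simp
qed

lemma cardX: "card X = n * mm"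
proof -
  have "lev n z < int n" if "z \<in> X" for z using ranges(2) XM that by blast
  then have "{z \<in> X. lev n z < int n} = X" by force
  then show ?thesis using card_below[of n] by simp
qed


lemma sum_ind: "finite A \<Longrightarrow> (\<Sum>x\<in>A. if P x then 1 else 0::nat) = card {x \<in> A. P x}"
proof -
  assume "finite A"
  moreover have "A \<inter> Collect P = {x \<in> A. P x}" by auto
  ultimately show ?thesis by (simp add: sum.If_cases)
qed

definition WW :: nat where "WW = card {z \<in> X. xx z = 2 * int n - 1}"

definition CRs :: nat where "CRs = (\<Sum>p\<in>X. \<Sum>q\<in>X. if CRi p q then 1 else 0)"

lemma sum_Cr: "(\<Sum>p\<in>X. \<Sum>q\<in>X. if lev n p < lev n q \<and> lev n q = int n - 1 then 1 else 0::nat) = (n - 1) * mm * mm"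
proof -
  have "(\<Sum>p\<in>X. \<Sum>q\<in>X. if lev n p < lev n q \<and> lev n q = int n - 1 then 1 else 0::nat)
      = (\<Sum>p\<in>X. \<Sum>q\<in>X. (if lev n p < int n - 1 then 1 else 0) * (if lev n q = int n - 1 then 1 else 0::nat))"
    by (intro sum.cong refl) auto
  also have "\<dots> = (\<Sum>p\<in>X. if lev n p < int n - 1 then 1 else 0) * (\<Sum>q\<in>X. if lev n q = int n - 1 then 1 else 0::nat)"
    by (simp add: sum_product)
  also have "\<dots> = card {z \<in> X. lev n z < int (n - 1)} * card (Xl (int n - 1))"
    using finX n2 by (simp add: sum_ind Xl_def of_nat_diff)
  also have "\<dots> = (n - 1) * mm * mm"
    using card_below[of "n - 1"] card_level[of "int n - 1"] n2 by simp
  finally show ?thesis .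
qed

lemma sum_Sm: "(\<Sum>p\<in>X. \<Sum>q\<in>X. if lev n p = lev n q \<and> xx q = 2 * int n - 1 \<and> p \<noteq> q then 1 else 0::nat) + WW = WW * mm"
proof -
  have "(\<Sum>p\<in>X. \<Sum>q\<in>X. if lev n p = lev n q \<and> xx q = 2 * int n - 1 \<and> p \<noteq> q then 1 else 0::nat)
      = (\<Sum>q\<in>X. \<Sum>p\<in>X. if lev n p = lev n q \<and> xx q = 2 * int n - 1 \<and> p \<noteq> q then 1 else 0::nat)"
    by (rule sum.swap)
  also have "\<dots> = (\<Sum>q\<in>X. if xx q = 2 * int n - 1 then card (Xl (lev n q) - {q}) else 0)"
  proof (intro sum.cong refl)
    fix q assume q: "q \<in> X"
    have "(\<Sum>p\<in>X. if lev n p = lev n q \<and> xx q = 2 * int n - 1 \<and> p \<noteq> q then 1 else 0::nat)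
        = card {p \<in> X. lev n p = lev n q \<and> xx q = 2 * int n - 1 \<and> p \<noteq> q}"
      using finX by (rule sum_ind)
    also have "\<dots> = (if xx q = 2 * int n - 1 then card (Xl (lev n q) - {q}) else 0)"
    proof (cases "xx q = 2 * int n - 1")
      case True
      have "{p \<in> X. lev n p = lev n q \<and> xx q = 2 * int n - 1 \<and> p \<noteq> q} = Xl (lev n q) - {q}"
        using True by (auto simp: Xl_def)
      then show ?thesis using True by simp
    next
      case False then show ?thesis by simp
    qed
    finally show "(\<Sum>p\<in>X. if lev n p = lev n q \<and> xx q = 2 * int n - 1 \<and> p \<noteq> q then 1 else 0::nat)
        = (if xx q = 2 * int n - 1 then card (Xl (lev n q) - {q}) else 0)" .
  qed
  finally have e1: "(\<Sum>p\<in>X. \<Sum>q\<in>X. if lev n p = lev n q \<and> xx q = 2 * int n - 1 \<and> p \<noteq> q then 1 else 0::nat)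
      = (\<Sum>q\<in>X. if xx q = 2 * int n - 1 then card (Xl (lev n q) - {q}) else 0)" .
  have e2: "WW = (\<Sum>q\<in>X. if xx q = 2 * int n - 1 then 1 else 0)"
    using finX by (simp add: sum_ind WW_def)
  have e3: "(if xx q = 2 * int n - 1 then card (Xl (lev n q) - {q}) else 0) + (if xx q = 2 * int n - 1 then 1 else 0)
       = (if xx q = 2 * int n - 1 then mm else 0)" if q: "q \<in> X" for q
  proof -
    have qM: "q \<in> M" using q XM by auto
    have qX: "q \<in> Xl (lev n q)" using q by (simp add: Xl_def)
    have "card (Xl (lev n q)) = mm" using card_level ranges[OF qM] by simp
    moreover have "card (Xl (lev n q) - {q}) + 1 = card (Xl (lev n q))"
      using qX finXl card_Diff_singleton[OF qX] card_gt_0_iff[of "Xl (lev n q)"] by fastforce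
    ultimately show ?thesis by auto
  qed
  have "(\<Sum>q\<in>X. if xx q = 2 * int n - 1 then card (Xl (lev n q) - {q}) else 0) + WW
      = (\<Sum>q\<in>X. if xx q = 2 * int n - 1 then mm else 0)"
    unfolding e2 sum.distrib[symmetric] using e3 by (intro sum.cong refl) auto
  also have "\<dots> = (\<Sum>q\<in>X. (if xx q = 2 * int n - 1 then 1 else 0) * mm)"
    by (intro sum.cong) auto
  also have "\<dots> = WW * mm" by (simp add: sum_distrib_right[symmetric] e2)
  finally show ?thesis using e1 by simp
qed

lemma sum_CR:
  "(\<Sum>p\<in>X. \<Sum>q\<in>X. if CRi q p \<and> xx q = 2 * int n - 1 then 1 else 0::nat)
   + (\<Sum>p\<in>X. \<Sum>q\<in>X. if CRi p q \<and> xx p \<noteq> 2 * int n - 1 then 1 else 0::nat) = CRs"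
proof -
  have e: "(\<Sum>p\<in>X. \<Sum>q\<in>X. if CRi q p \<and> xx q = 2 * int n - 1 then 1 else 0::nat)
     = (\<Sum>p\<in>X. \<Sum>q\<in>X. if CRi p q \<and> xx p = 2 * int n - 1 then 1 else 0::nat)"
    by (rule sum.swap)
  have "(\<Sum>p\<in>X. \<Sum>q\<in>X. if CRi p q \<and> xx p = 2 * int n - 1 then 1 else 0::nat)
   + (\<Sum>p\<in>X. \<Sum>q\<in>X. if CRi p q \<and> xx p \<noteq> 2 * int n - 1 then 1 else 0::nat)
   = (\<Sum>p\<in>X. \<Sum>q\<in>X. (if CRi p q \<and> xx p = 2 * int n - 1 then 1 else 0::nat)
        + (if CRi p q \<and> xx p \<noteq> 2 * int n - 1 then 1 else 0::nat))"
    by (simp add: sum.distrib)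
  also have "\<dots> = CRs" unfolding CRs_def by (intro sum.cong refl) auto
  finally show ?thesis using e by simp
qed

lemma count_main:
  "invn (key n) (key n \<circ> \<rho>) X + CRs + WW = (n - 1) * mm * mm + WW * mm
     + 2 * (\<Sum>p\<in>X. \<Sum>q\<in>X. if CRi p q \<and> xx p \<noteq> 2 * int n - 1 then 1 else 0::nat)"
proof -
  define E where "E = (\<Sum>p\<in>X. \<Sum>q\<in>X. if CRi p q \<and> xx p \<noteq> 2 * int n - 1 then 1 else 0::nat)"
  have "invn (key n) (key n \<circ> \<rho>) X + (\<Sum>p\<in>X. \<Sum>q\<in>X. if CRi q p \<and> xx q = 2 * int n - 1 then 1 else 0::nat)
      = (\<Sum>p\<in>X. \<Sum>q\<in>X. (if key n p < key n q \<and> (key n \<circ> \<rho>) q < (key n \<circ> \<rho>) p then 1 else 0)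
           + (if CRi q p \<and> xx q = 2 * int n - 1 then 1 else 0))"
    unfolding invn_def by (simp add: sum.distrib)
  also have "\<dots> = (\<Sum>p\<in>X. \<Sum>q\<in>X. (if lev n p < lev n q \<and> lev n q = int n - 1 then 1 else 0)
     + (if lev n p = lev n q \<and> xx q = 2 * int n - 1 \<and> p \<noteq> q then 1 else 0)
     + (if CRi p q \<and> xx p \<noteq> 2 * int n - 1 then 1 else (0::nat)))"
    by (intro sum.cong refl pointwise)
  also have "\<dots> = (n - 1) * mm * mm + (\<Sum>p\<in>X. \<Sum>q\<in>X. if lev n p = lev n q \<and> xx q = 2 * int n - 1 \<and> p \<noteq> q then 1 else 0::nat) + E"
    unfolding E_def sum_Cr[symmetric] by (simp add: sum.distrib)
  finally have "invn (key n) (key n \<circ> \<rho>) X + (\<Sum>p\<in>X. \<Sum>q\<in>X. if CRi q p \<and> xx q = 2 * int n - 1 then 1 else 0::nat) + WW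
      = (n - 1) * mm * mm + WW * mm + E" using sum_Sm by simp
  then show ?thesis using sum_CR unfolding E_def by simp
qed


lemma pred_mod: "0 \<le> i \<Longrightarrow> i < int n \<Longrightarrow> (i - 1) mod int n = (if i = 0 then int n - 1 else i - 1)"
proof -
  assume i: "0 \<le> i" "i < int n"
  show ?thesis
  proof (cases "i = 0")
    case True
    have A: "(-1 + int n) mod int n = -1 + int n" using npos by (intro mod_pos_pos_trivial) auto
    have "(-1) mod int n = int n - 1" using mod_add_self2[of "-1" "int n"] A by linarith
    then show ?thesis using True by simp
  next
    case False then show ?thesis using i by (simp add: mod_pos_pos_trivial)
  qed
qed

definition phi :: "int \<times> int \<Rightarrow> midedge \<times> midedge" where
  "phi v = ((True, (fst v - 1) mod int n, snd v), (False, fst v, (snd v - 1) mod int n))"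

definition VV :: "(int \<times> int) set" where
  "VV = {(i, j). 0 \<le> i \<and> i < int n \<and> 0 \<le> j \<and> j < int n \<and>
      \<rho> (True, (i - 1) mod int n, j) = (True, i, j) \<and>
      \<rho> (False, i, (j - 1) mod int n) = (False, i, j)}"

lemma crossings_VV: "crossings n \<rho> = card VV"
  by (simp add: crossings_def VV_def)

lemma VV_sub: "v \<in> VV \<Longrightarrow> phi v \<in> X \<times> X \<and> CRi (fst (phi v)) (snd (phi v))"
proof -
  assume v: "v \<in> VV"
  obtain i j where ij: "v = (i, j)" by (cases v) auto
  have r: "0 \<le> i" "i < int n" "0 \<le> j" "j < int n"
    and r1: "\<rho> (True, (i - 1) mod int n, j) = (True, i, j)"
    and r2: "\<rho> (False, i, (j - 1) mod int n) = (False, i, j)"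
    using v by (auto simp: VV_def ij)
  define p where "p = (True, (i - 1) mod int n, j)"
  define q where "q = (False, i, (j - 1) mod int n)"
  have pM: "p \<in> M" and qM: "q \<in> M" using r npos by (auto simp: p_def q_def midedges_def)
  have e1: "((i - 1) mod int n + 1) mod int n = i"
  proof -
    have "((i - 1) mod int n + 1) mod int n = ((i - 1) + 1) mod int n" by (rule mod_add_left_eq)
    then show ?thesis using r by (simp add: mod_pos_pos_trivial)
  qed
  have e2: "((j - 1) mod int n + 1) mod int n = j"
  proof -
    have "((j - 1) mod int n + 1) mod int n = ((j - 1) + 1) mod int n" by (rule mod_add_left_eq)
    then show ?thesis using r by (simp add: mod_pos_pos_trivial)
  qed
  have tp: "tr_e1 n p = (True, i, j)" using e1 by (simp add: p_def tr_e1_def)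
  have tq: "tr_e2 n q = (False, i, j)" using e2 by (simp add: q_def tr_e2_def)
  have rp: "\<rho> p = tr_e1 n p" using r1 tp by (simp add: p_def)
  have rq: "\<rho> q = tr_e2 n q" using r2 tq by (simp add: q_def)
  have pX: "p \<in> X" using pM rp tr_facts[OF pM] by (simp add: X_def)
  have qX: "q \<in> X" using qM rq tr_facts[OF qM] by (simp add: X_def)
  have dp: "dl p = 2" using rp by (simp add: dl_def)
  have dq: "dl q = 0" using rq tr_facts[OF qM] by (auto simp: dl_def)
  have lp: "lev n p = (i - 1 + j) mod int n"
  proof -
    have "((i - 1) mod int n + j) mod int n = ((i - 1) + j) mod int n" by (rule mod_add_left_eq)
    then show ?thesis by (simp add: p_def lev_def)
  qed
  have lq: "lev n q = (i - 1 + j) mod int n"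
  proof -
    have "(i + (j - 1) mod int n) mod int n = (i + (j - 1)) mod int n" by (rule mod_add_right_eq)
    then show ?thesis by (simp add: q_def lev_def algebra_simps)
  qed
  have xq: "xx q = (if xx p = 2 * int n - 1 then 0 else xx p + 1)"
    using pred_mod[OF r(1,2)] r by (auto simp: p_def q_def xx_def)
  have "CRi p q" using dp dq lp lq xq by (simp add: CRi_def)
  then show ?thesis using pX qX by (simp add: phi_def ij p_def q_def)
qed

lemma VV_sup:
  assumes p: "p \<in> X" and q: "q \<in> X" and c: "CRi p q"
  shows "(p, q) \<in> phi ` VV"
proof -
  have pM: "p \<in> M" and qM: "q \<in> M" using p q XM by auto
  have dp: "dl p = 2" and dq: "dl q = 0" and lv: "lev n p = lev n q"
    and xq: "xx q = (if xx p = 2 * int n - 1 then 0 else xx p + 1)" using c by (auto simp: CRi_def)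
  have fp: "fst p" and rp: "\<rho> p = tr_e1 n p" using dl_cases[OF p] dp by (cases "fst p"; auto)+
  have fq: "\<not> fst q" and rq: "\<rho> q = tr_e2 n q" using dl_cases[OF q] dq by (cases "fst q"; auto)+
  obtain i0 j0 where pe: "p = (True, i0, j0)" using fp by (cases p) auto
  obtain i1 j1 where qe: "q = (False, i1, j1)" using fq by (cases q) auto
  have r: "0 \<le> i0" "i0 < int n" "0 \<le> j0" "j0 < int n" "0 \<le> i1" "i1 < int n" "0 \<le> j1" "j1 < int n"
    using pM qM by (auto simp: pe qe midedges_def)
  have i1: "i1 = (if i0 = int n - 1 then 0 else i0 + 1)"
    using xq by (auto simp: pe qe xx_def split: if_splits)
  have i1m: "(i0 + 1) mod int n = i1" using succ_mod[OF r(1,2)] i1 by simp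
  have i0: "(i1 - 1) mod int n = i0" using pred_mod[OF r(5,6)] i1 r by auto
  have lv': "(i0 + j0) mod int n = (i1 + j1) mod int n" using lv by (simp add: pe qe lev_def)
  have "((i0 + j0) - (i0 + 1)) mod int n = ((i1 + j1) - i1) mod int n"
  proof (rule mod_diff_cong[OF lv'])
    show "(i0 + 1) mod int n = i1 mod int n" using i1m r by (simp add: mod_pos_pos_trivial)
  qed
  then have j1: "(j0 - 1) mod int n = j1" using r by (simp add: mod_pos_pos_trivial)
  have j0: "(j1 + 1) mod int n = j0"
  proof -
    have "((j0 - 1) mod int n + 1) mod int n = ((j0 - 1) + 1) mod int n" by (rule mod_add_left_eq)
    then show ?thesis using j1 r by (simp add: mod_pos_pos_trivial)
  qed
  have "(i1, j0) \<in> VV"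
    using rp rq r i0 j1 i1m j0 by (simp add: VV_def pe qe tr_e1_def tr_e2_def)
  moreover have "phi (i1, j0) = (p, q)" using i0 j1 by (simp add: phi_def pe qe)
  ultimately show ?thesis by force
qed

lemma inj_phi: "inj_on phi VV"
  by (rule inj_onI) (auto simp: phi_def)

lemma CRs_crossings: "CRs = crossings n \<rho>"
proof -
  have "CRs = (\<Sum>z\<in>X \<times> X. if CRi (fst z) (snd z) then 1 else 0)"
    unfolding CRs_def by (simp add: sum.cartesian_product case_prod_beta)
  also have "\<dots> = card {z \<in> X \<times> X. CRi (fst z) (snd z)}"
    using finX by (intro sum_ind) simp
  also have "{z \<in> X \<times> X. CRi (fst z) (snd z)} = phi ` VV"
  proof
    show "{z \<in> X \<times> X. CRi (fst z) (snd z)} \<subseteq> phi ` VV" using VV_sup by auto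
    show "phi ` VV \<subseteq> {z \<in> X \<times> X. CRi (fst z) (snd z)}"
    proof (rule image_subsetI)
      fix v assume v: "v \<in> VV"
      show "phi v \<in> {z \<in> X \<times> X. CRi (fst z) (snd z)}" using VV_sub[OF v] by blast
    qed
  qed
  also have "card (phi ` VV) = card VV" using inj_phi by (rule card_image)
  finally show ?thesis using crossings_VV by simp
qed


lemma sum_ind_int: "finite A \<Longrightarrow> (\<Sum>x\<in>A. if P x then 1 else 0::int) = int (card {x \<in> A. P x})"
proof -
  assume "finite A"
  moreover have "A \<inter> Collect P = {x \<in> A. P x}" by auto
  ultimately show ?thesis by (simp add: sum.If_cases)
qed

lemma sum_dl: "(\<Sum>z\<in>M. dl z) = 2 * int (countA n \<rho>) + int (countC n \<rho>)"
proof -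
  have "(\<Sum>z\<in>M. dl z) = (\<Sum>z\<in>M. 2 * (if \<rho> z = tr_e1 n z then 1 else 0) + (if \<rho> z = tr_e3 n z then 1 else 0::int))"
    using tr_facts by (intro sum.cong refl) (auto simp: dl_def)
  also have "\<dots> = 2 * (\<Sum>z\<in>M. if \<rho> z = tr_e1 n z then 1 else 0::int) + (\<Sum>z\<in>M. if \<rho> z = tr_e3 n z then 1 else 0::int)"
    by (simp add: sum.distrib sum_distrib_left)
  also have "\<dots> = 2 * int (countA n \<rho>) + int (countC n \<rho>)"
    using finM by (simp add: sum_ind_int countA_def countC_def)
  finally show ?thesis .
qed

lemma sum_dl2: "(\<Sum>z\<in>M. dl z) = 2 * int n * int WW"
proof -
  have pw: "xx (\<rho> z) = xx z + dl z - 2 * int n * (if z \<in> X \<and> xx z = 2 * int n - 1 then 1 else 0)"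
    if z: "z \<in> M" for z
  proof (cases "z \<in> X")
    case True
    note R = ranges[OF z] and S = step[OF True]
    note D = dfacts[OF R(3,4) S(3,4)]
    show ?thesis using S(2) D True by (auto simp: wrapx_def)
  next
    case False
    then have "\<rho> z = z" using z by (simp add: X_def)
    then show ?thesis using dl_fix[OF z False] False by simp
  qed
  have "(\<Sum>z\<in>M. xx (\<rho> z)) = (\<Sum>z\<in>M. xx z)"
    by (rule sum.reindex_bij_betw[OF permutes_imp_bij[OF perm]])
  moreover have "(\<Sum>z\<in>M. xx (\<rho> z)) = (\<Sum>z\<in>M. xx z) + (\<Sum>z\<in>M. dl z)
      - 2 * int n * (\<Sum>z\<in>M. if z \<in> X \<and> xx z = 2 * int n - 1 then 1 else 0)"
    using pw by (simp add: sum.distrib sum_subtractf sum_distrib_left)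
  moreover have "(\<Sum>z\<in>M. if z \<in> X \<and> xx z = 2 * int n - 1 then 1 else 0::int) = int WW"
  proof -
    have "{z \<in> M. z \<in> X \<and> xx z = 2 * int n - 1} = {z \<in> X. xx z = 2 * int n - 1}" using XM by auto
    then show ?thesis using finM by (simp add: sum_ind_int WW_def)
  qed
  ultimately show ?thesis by simp
qed

lemma card_ABC: "countA n \<rho> + countB n \<rho> + countC n \<rho> = n * mm"
proof -
  have "card X = (\<Sum>z\<in>M. if z \<in> X then 1 else 0::nat)"
  proof -
    have "{z \<in> M. z \<in> X} = X" using XM by auto
    then show ?thesis using finM by (simp add: sum_ind)
  qed
  also have "\<dots> = (\<Sum>z\<in>M. (if \<rho> z = tr_e1 n z then 1 else 0) + (if \<rho> z = tr_e2 n z then 1 else 0)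
        + (if \<rho> z = tr_e3 n z then 1 else 0::nat))"
  proof (intro sum.cong refl)
    fix z assume z: "z \<in> M"
    note T = tr_facts[OF z]
    show "(if z \<in> X then 1 else 0::nat) = (if \<rho> z = tr_e1 n z then 1 else 0) + (if \<rho> z = tr_e2 n z then 1 else 0)
        + (if \<rho> z = tr_e3 n z then 1 else 0)"
    proof (cases "z \<in> X")
      case True
      then show ?thesis using dl_cases[OF True] T by (cases "fst z") auto
    next
      case False
      then have "\<rho> z = z" using z by (simp add: X_def)
      then show ?thesis using False T by auto
    qed
  qed
  also have "\<dots> = countA n \<rho> + countB n \<rho> + countC n \<rho>"
    using finM by (simp add: sum.distrib sum_ind countA_def countB_def countC_def)
  finally show ?thesis using cardX by simp
qed


lemma sign_cross: "sign \<rho> * (-1) ^ crossings n \<rho> = (-1) ^ ((n - 1) * mm * mm + WW * mm + WW)"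
proof -
  define I where "I = invn (key n) (key n \<circ> \<rho>) X"
  define E where "E = (\<Sum>p\<in>X. \<Sum>q\<in>X. if CRi p q \<and> xx p \<noteq> 2 * int n - 1 then 1 else 0::nat)"
  have c: "I + crossings n \<rho> + WW = (n - 1) * mm * mm + WW * mm + 2 * E"
    using count_main CRs_crossings unfolding I_def E_def by simp
  have s: "sign \<rho> = (-1) ^ I" using sign_eq unfolding I_def .
  have sq: "((-1::int) ^ E) ^ 2 = 1"
  proof -
    have "((-1::int) ^ E) ^ 2 = (-1) ^ (E * 2)" by (simp only: power_mult)
    then show ?thesis by simp
  qed
  have "sign \<rho> * (-1) ^ crossings n \<rho> = ((-1::int) ^ (I + crossings n \<rho> + WW)) * (-1) ^ WW"
    using s by (simp add: power_add)
  also have "\<dots> = (-1) ^ ((n - 1) * mm * mm + WW * mm) * ((-1) ^ E) ^ 2 * (-1) ^ WW"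
    unfolding c by (simp add: power_add power_mult sq)
  also have "\<dots> = (-1) ^ ((n - 1) * mm * mm + WW * mm + WW)"
    using sq by (simp add: power_add)
  finally show ?thesis .
qed

end

lemma exp_int_pi: "exp (\<i> * complex_of_real (pi * real k)) = (-1) ^ k"
proof -
  have "\<i> * complex_of_real (pi * real k) = of_nat k * (\<i> * pi)" by simp
  then show ?thesis by (simp only: exp_of_nat_mult exp_pi_i')
qed

lemma parity_final:
  fixes n m W :: nat
  assumes "n \<ge> 2"
  shows "(complex_of_int ((-1) ^ ((n - 1) * m * m + W * m + W))) =
    (\<Sum>\<theta>1\<in>{0::nat,1}. \<Sum>\<theta>2\<in>{0::nat,1}.
       (1/2 * (-1) ^ ((\<theta>1 + n + 1) * (\<theta>2 + n + 1))) * ((-1) ^ (\<theta>1 * W + \<theta>2 * m) * (-1) ^ (\<theta>2 * W)))"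
proof -
  obtain k where k: "n = Suc k" using assms by (cases n) auto
  have neg: "(-1::complex) ^ j = (if even j then 1 else -1)" for j by simp
  have negi: "(-1::int) ^ j = (if even j then 1 else -1)" for j by simp
  show ?thesis unfolding k
    by (cases "even k"; cases "even m"; cases "even W") (simp_all add: neg negi)
qed

theorem lemma3p2:
  fixes n :: nat and \<rho> :: "midedge \<Rightarrow> midedge"
  assumes "n \<ge> 2" and "\<rho> \<in> GS n"
  shows "complex_of_int (sign \<rho> * (-1) ^ crossings n \<rho>) =
    (\<Sum>\<theta>1\<in>{0::nat,1}. \<Sum>\<theta>2\<in>{0::nat,1}.
       (1/2 * (-1) ^ ((\<theta>1 + n + 1) * (\<theta>2 + n + 1))) *
       exp (\<i> * complex_of_real (pi * real \<theta>1 / real n * (real (countA n \<rho>) + real (countC n \<rho>) / 2))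
          + \<i> * complex_of_real (pi * real \<theta>2 / real n * (real (countB n \<rho>) + real (countC n \<rho>) / 2))))"
proof -
  interpret snake n \<rho> using assms by unfold_locales
  have n0: "real n \<noteq> 0" using assms by simp
  have hA: "real (countA n \<rho>) + real (countC n \<rho>) / 2 = real n * real WW"
  proof -
    have "2 * int (countA n \<rho>) + int (countC n \<rho>) = 2 * int n * int WW" using sum_dl sum_dl2 by simp
    then have "int (2 * countA n \<rho> + countC n \<rho>) = int (2 * n * WW)" by simp
    then have "2 * countA n \<rho> + countC n \<rho> = 2 * n * WW" by (simp only: of_nat_eq_iff)
    then have "real (2 * countA n \<rho> + countC n \<rho>) = real (2 * n * WW)" by (simp only:)
    then have "2 * real (countA n \<rho>) + real (countC n \<rho>) = 2 * real n * real WW" by simp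
    then show ?thesis by simp
  qed
  have hB: "real (countB n \<rho>) + real (countC n \<rho>) / 2 = real n * real mm - real n * real WW"
  proof -
    have "real (countA n \<rho>) + real (countB n \<rho>) + real (countC n \<rho>) = real n * real mm"
      using card_ABC by (metis of_nat_add of_nat_mult)
    then show ?thesis using hA by simp
  qed
  have ex: "exp (\<i> * complex_of_real (pi * real \<theta>1 / real n * (real (countA n \<rho>) + real (countC n \<rho>) / 2))
          + \<i> * complex_of_real (pi * real \<theta>2 / real n * (real (countB n \<rho>) + real (countC n \<rho>) / 2)))
        = (-1) ^ (\<theta>1 * WW + \<theta>2 * mm) * (-1) ^ (\<theta>2 * WW)" for \<theta>1 \<theta>2 :: nat
  proof -
    have "\<i> * complex_of_real (pi * real \<theta>1 / real n * (real (countA n \<rho>) + real (countC n \<rho>) / 2))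
          + \<i> * complex_of_real (pi * real \<theta>2 / real n * (real (countB n \<rho>) + real (countC n \<rho>) / 2))
        = \<i> * complex_of_real (pi * real (\<theta>1 * WW + \<theta>2 * mm)) - \<i> * complex_of_real (pi * real (\<theta>2 * WW))"
      unfolding hA hB using n0 by (simp add: field_simps)
    then have "exp (\<i> * complex_of_real (pi * real \<theta>1 / real n * (real (countA n \<rho>) + real (countC n \<rho>) / 2))
          + \<i> * complex_of_real (pi * real \<theta>2 / real n * (real (countB n \<rho>) + real (countC n \<rho>) / 2)))
        = exp (\<i> * complex_of_real (pi * real (\<theta>1 * WW + \<theta>2 * mm))) / exp (\<i> * complex_of_real (pi * real (\<theta>2 * WW)))"
      by (simp add: exp_diff)
    also have "\<dots> = (-1) ^ (\<theta>1 * WW + \<theta>2 * mm) / (-1) ^ (\<theta>2 * WW)" by (simp only: exp_int_pi)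
    also have "\<dots> = (-1) ^ (\<theta>1 * WW + \<theta>2 * mm) * (-1) ^ (\<theta>2 * WW)"
      by (cases "even (\<theta>2 * WW)") simp_all
    finally show ?thesis .
  qed
  show ?thesis unfolding ex sign_cross using parity_final[OF assms(1)] by simp
qed

end
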